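(* Let $\Gamma$ be a countable group, $E$ a countable free $\Gamma$-set, $\Gamma\curvearrowright(X,\mu)$ a free standard $\Gamma$-space, and $P=(W_s)_{s\in S}$ a $\Gamma$-equivariant $\mu$-partition of $X\times E$ of finite type, with $S$ countable. Then \[\Phi^P\colon\mathbb{Z}[E^{*+1}]\to L^\infty_{fs}(X\times S^{*+1};\mathbb{Z}),\qquad (e_0,\dots,e_n)\mapsto\big((x,s_0,\dots,s_n)\mapsto\chi_{W_{(s_0,\dots,s_n)}}(x,e_0,\dots,e_n)\big)\] is a well-defined $\mathbb{Z}\Gamma$-chain map that extends the inclusion $\mathbb{Z}\hookrightarrow L^\infty(X;\mathbb{Z})$.
   Context: A standard $\Gamma$-space is a measure preserving action on a standard Borel probability space $(X,\mu)$. A $\Gamma$-equivariant $\mu$-partition of $X\times E$ is a family $(W_s)_{s\in S}$ of pairwise disjoint Borel subsets of $X\times E$ whose union is conull for $\mu\otimes$(counting measure), where $S$ carries a free $\Gamma$-action with $\gamma\cdot W_s=W_{\gamma s}$ (diagonal action on $X\times E$). It is of finite type if for each $e\in E$ only finitely many $s$ satisfy $W_s\cap(X\times\{e\})\neq\emptyset$. For $s=(s_0,\dots,s_n)\in S^{n+1}$, $W_{s}:=\{(x,e_0,\dots,e_n): (x,e_r)\in W_{s_r}\ \forall r\}$. $L^\infty_{fs}(X\times S^{n+1};\mathbb{Z})$ is the $\mathbb{Z}\Gamma$-module of (classes of) essentially bounded measurable $f\colon X\times S^{n+1}\to\mathbb{Z}$ supported in $X\times F$ for a finite $F\subset S^{n+1}$,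 with diagonal $\Gamma$-action, boundary $(\partial_nf)(x,s_0,\dots,s_{n-1})=\sum_{j=0}^n(-1)^j\sum_{t\in S}f(x,s_0,\dots,s_{j-1},t,s_j,\dots,s_{n-1})$, augmentation $\tilde\varepsilon_Sf=\sum_sf(\cdot,s)$. $\mathbb{Z}[E^{*+1}]$ has the simplicial boundary and augmentation $\varepsilon_E(e)=1$. Extending the inclusion $\iota$ of constants means $\tilde\varepsilon_S\circ\Phi^P_0=\iota\circ\varepsilon_E$. *)

theory Defs
  imports "HOL-Probability.Probability"
begin

definition group_action :: "('g::group_add \<Rightarrow> 'a \<Rightarrow> 'a) \<Rightarrow> bool" where
  "group_action act \<longleftrightarrow> (\<forall>x. act 0 x = x) \<and> (\<forall>g h x. act (g + h) x = act g (act h x))"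

definition free_action :: "('g::group_add \<Rightarrow> 'a \<Rightarrow> 'a) \<Rightarrow> bool" where
  "free_action act \<longleftrightarrow> (\<forall>g x. act g x = x \<longrightarrow> g = 0)"

text \<open>Standard Gamma-space: measure preserving action on a standard Borel probability space.
  The space is modelled as a Polish space with its Borel sigma-algebra.\<close>
definition standard_gamma_space :: "'x::polish_space measure \<Rightarrow> ('g::group_add \<Rightarrow> 'x \<Rightarrow> 'x) \<Rightarrow> bool" where
  "standard_gamma_space M act \<longleftrightarrow> prob_space M \<and> sets M = sets borel \<and> group_action act \<and>
     (\<forall>g. act g \<in> measurable M M \<and> distr M M (act g) = M)"

definition ess_free :: "'x measure \<Rightarrow> ('g::group_add \<Rightarrow> 'x \<Rightarrow> 'x) \<Rightarrow> bool" where
  "ess_free M act \<longleftrightarrow> (AE x in M. \<forall>g. act g x = x \<longrightarrow> g = 0)"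

definition equivariant_partition ::
  "'x measure \<Rightarrow> ('g::group_add \<Rightarrow> 'x \<Rightarrow> 'x) \<Rightarrow> ('g \<Rightarrow> 'e \<Rightarrow> 'e) \<Rightarrow> ('g \<Rightarrow> 's \<Rightarrow> 's)
     \<Rightarrow> ('s \<Rightarrow> ('x \<times> 'e) set) \<Rightarrow> bool" where
  "equivariant_partition M actX actE actS W \<longleftrightarrow>
     group_action actS \<and> free_action actS \<and>
     (\<forall>s. W s \<in> sets (M \<Otimes>\<^sub>M count_space UNIV)) \<and>
     disjoint_family W \<and>
     (space (M \<Otimes>\<^sub>M count_space UNIV) - (\<Union>s. W s)) \<in> null_sets (M \<Otimes>\<^sub>M count_space UNIV) \<and>
     (\<forall>g s. (\<lambda>(x, e). (actX g x, actE g e)) ` W s = W (actS g s))"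

definition finite_type :: "('s \<Rightarrow> ('x \<times> 'e) set) \<Rightarrow> bool" where
  "finite_type W \<longleftrightarrow> (\<forall>e. finite {s. W s \<inter> (UNIV \<times> {e}) \<noteq> {}})"

text \<open>W_{(s_0,...,s_n)} as a set of (x, [e_0,...,e_n]).\<close>
definition Wtup :: "('s \<Rightarrow> ('x \<times> 'e) set) \<Rightarrow> 's list \<Rightarrow> ('x \<times> 'e list) set" where
  "Wtup W ss = {(x, es). length es = length ss \<and> (\<forall>r < length ss. (x, es ! r) \<in> W (ss ! r))}"

text \<open>A degree n chain: finitely supported integer function on (n+1)-tuples (lists of length n+1).\<close>
definition supp :: "('a \<Rightarrow> int) \<Rightarrow> 'a set" where
  "supp c = {a. c a \<noteq> 0}"

definition zchain :: "nat \<Rightarrow> ('e list \<Rightarrow> int) \<Rightarrow> bool" where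
  "zchain n c \<longleftrightarrow> finite (supp c) \<and> (\<forall>es \<in> supp c. length es = Suc n)"

definition del_at :: "nat \<Rightarrow> 'a list \<Rightarrow> 'a list" where
  "del_at j xs = take j xs @ drop (Suc j) xs"

definition ins_at :: "nat \<Rightarrow> 'a \<Rightarrow> 'a list \<Rightarrow> 'a list" where
  "ins_at j t xs = take j xs @ t # drop j xs"

definition bdE :: "('e list \<Rightarrow> int) \<Rightarrow> 'e list \<Rightarrow> int" where
  "bdE c ds = (\<Sum>es \<in> supp c. c es * (\<Sum>j < length es. if del_at j es = ds then (-1) ^ j else 0))"

definition augE :: "('e list \<Rightarrow> int) \<Rightarrow> int" where
  "augE c = (\<Sum>es \<in> supp c. c es)"

definition actC :: "('g::group_add \<Rightarrow> 'e \<Rightarrow> 'e) \<Rightarrow> 'g \<Rightarrow> ('e list \<Rightarrow> int) \<Rightarrow> 'e list \<Rightarrow> int" where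
  "actC actE g c es = c (map (actE (- g)) es)"

text \<open>Functions f x ss, where ss ranges over (n+1)-tuples of S (lists of length n+1).\<close>
definition tuples :: "nat \<Rightarrow> 's list set" where
  "tuples n = {ss. length ss = Suc n}"

definition Linf_fs :: "'x measure \<Rightarrow> nat \<Rightarrow> ('x \<Rightarrow> 's list \<Rightarrow> int) \<Rightarrow> bool" where
  "Linf_fs M n f \<longleftrightarrow>
     (\<lambda>(x, ss). f x ss) \<in> measurable (M \<Otimes>\<^sub>M count_space (tuples n)) (count_space UNIV) \<and>
     (\<exists>B. AE p in M \<Otimes>\<^sub>M count_space (tuples n). \<bar>f (fst p) (snd p)\<bar> \<le> B) \<and>
     (\<exists>F. finite F \<and> F \<subseteq> tuples n \<and> (\<forall>x ss. ss \<notin> F \<longrightarrow> f x ss = 0))"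

text \<open>Equality of classes: almost everywhere for mu tensor counting measure on S^{n+1}.\<close>
definition aeq :: "'x measure \<Rightarrow> nat \<Rightarrow> ('x \<Rightarrow> 's list \<Rightarrow> int) \<Rightarrow> ('x \<Rightarrow> 's list \<Rightarrow> int) \<Rightarrow> bool" where
  "aeq M n f g \<longleftrightarrow> (AE p in M \<Otimes>\<^sub>M count_space (tuples n). f (fst p) (snd p) = g (fst p) (snd p))"

definition bdL :: "('x \<Rightarrow> 's list \<Rightarrow> int) \<Rightarrow> 'x \<Rightarrow> 's list \<Rightarrow> int" where
  "bdL f x ss = (\<Sum>j \<le> length ss. (-1) ^ j *
       (\<Sum>t \<in> {t. f x (ins_at j t ss) \<noteq> 0}. f x (ins_at j t ss)))"

definition augS :: "('x \<Rightarrow> 's list \<Rightarrow> int) \<Rightarrow> 'x \<Rightarrow> int" where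
  "augS f x = (\<Sum>s \<in> {s. f x [s] \<noteq> 0}. f x [s])"

definition actL :: "('g::group_add \<Rightarrow> 'x \<Rightarrow> 'x) \<Rightarrow> ('g \<Rightarrow> 's \<Rightarrow> 's) \<Rightarrow> 'g
    \<Rightarrow> ('x \<Rightarrow> 's list \<Rightarrow> int) \<Rightarrow> 'x \<Rightarrow> 's list \<Rightarrow> int" where
  "actL actX actS g f x ss = f (actX (- g) x) (map (actS (- g)) ss)"

definition Phi :: "('s \<Rightarrow> ('x \<times> 'e) set) \<Rightarrow> nat \<Rightarrow> ('e list \<Rightarrow> int) \<Rightarrow> 'x \<Rightarrow> 's list \<Rightarrow> int" where
  "Phi W n c x ss = (if length ss = Suc n
      then (\<Sum>es \<in> supp c. c es * indicator (Wtup W ss) (x, es)) else 0)"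

end

theory Submission imports Defs begin

lemma nth_ins_at: "j \<le> length xs \<Longrightarrow> r < Suc (length xs) \<Longrightarrow>
  ins_at j t xs ! r = (if r < j then xs ! r else if r = j then t else xs ! (r - 1))"
  unfolding ins_at_def by (auto simp: nth_append min_def nth_Cons' split: if_splits)

lemma length_ins_at[simp]: "length (ins_at j t xs) = Suc (length xs)"
  unfolding ins_at_def by auto

lemma length_del_at[simp]: "j < length xs \<Longrightarrow> length (del_at j xs) = length xs - 1"
  unfolding del_at_def by auto

lemma nth_del_at: "j < length xs \<Longrightarrow> r < length xs - 1 \<Longrightarrow>
  del_at j xs ! r = (if r < j then xs ! r else xs ! Suc r)"
  unfolding del_at_def by (auto simp: nth_append min_def)

lemma Wtup_ins_at:
  assumes "length es = Suc (length ss)" "j \<le> length ss"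
  shows "(x, es) \<in> Wtup W (ins_at j t ss) \<longleftrightarrow> (x, del_at j es) \<in> Wtup W ss \<and> (x, es ! j) \<in> W t"
proof -
  have A: "(\<forall>r<Suc (length ss). (x, es ! r) \<in> W (ins_at j t ss ! r)) \<longleftrightarrow>
     (\<forall>r<length ss. (x, del_at j es ! r) \<in> W (ss ! r)) \<and> (x, es ! j) \<in> W t" (is "?L \<longleftrightarrow> ?R")
  proof
    assume L: ?L
    show ?R
    proof (intro conjI allI impI)
      fix r assume r: "r < length ss"
      show "(x, del_at j es ! r) \<in> W (ss ! r)"
      proof (cases "r < j")
        case True then show ?thesis using L[rule_format, of r] r assms by (simp add: nth_ins_at nth_del_at)
      next
        case False then show ?thesis using L[rule_format, of "Suc r"] r assms by (simp add: nth_ins_at nth_del_at)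
      qed
    next
      show "(x, es ! j) \<in> W t" using L[rule_format, of j] assms by (simp add: nth_ins_at)
    qed
  next
    assume R: ?R
    show ?L
    proof (intro allI impI)
      fix r assume r: "r < Suc (length ss)"
      consider "r < j" | "r = j" | "r > j" by linarith
      then show "(x, es ! r) \<in> W (ins_at j t ss ! r)"
      proof cases
        case 1 then show ?thesis using R r assms conjunct1[OF R, rule_format, of r] by (simp add: nth_ins_at nth_del_at)
      next
        case 2 then show ?thesis using R r assms by (simp add: nth_ins_at)
      next
        case 3
        then have h: "r - 1 < length ss" "\<not> r - 1 < j" "Suc (r - 1) = r" using r by auto
        have "(x, del_at j es ! (r - 1)) \<in> W (ss ! (r - 1))" using R h(1) by blast
        then show ?thesis using 3 h assms by (simp add: nth_ins_at nth_del_at)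
      qed
    qed
  qed
  show ?thesis unfolding Wtup_def using A assms by simp
qed

lemma key_sum:
  fixes a :: "'b \<Rightarrow> int"
  assumes fin: "finite A" and disj: "disjoint_family W"
    and cov: "\<And>b. b \<in> A \<Longrightarrow> \<exists>s. (x, k b) \<in> W s"
  shows "(\<Sum>t\<in>{t. (\<Sum>b\<in>A. a b * indicator (W t) (x, k b)) \<noteq> 0}. (\<Sum>b\<in>A. a b * indicator (W t) (x, k b)))
       = (\<Sum>b\<in>A. a b)"
proof -
  define \<sigma> where "\<sigma> b = (SOME s. (x, k b) \<in> W s)" for b
  have sig: "(x, k b) \<in> W (\<sigma> b)" if "b \<in> A" for b
    using someI_ex[OF cov[OF that]] by (simp add: \<sigma>_def)
  have uniq: "(x, k b) \<in> W t \<longleftrightarrow> t = \<sigma> b" if "b \<in> A" for b t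
    using sig[OF that] disj unfolding disjoint_family_on_def by blast
  define F where "F t = (\<Sum>b\<in>A. a b * indicator (W t) (x, k b))" for t
  have F: "F t = (\<Sum>b\<in>A. if \<sigma> b = t then a b else 0)" for t
    unfolding F_def by (rule sum.cong) (auto simp: uniq indicator_def)
  have sub: "{t. F t \<noteq> 0} \<subseteq> \<sigma> ` A"
  proof
    fix t assume "t \<in> {t. F t \<noteq> 0}"
    then have "(\<Sum>b\<in>A. if \<sigma> b = t then a b else 0) \<noteq> 0" unfolding F by simp
    then obtain b where "b \<in> A" "(if \<sigma> b = t then a b else 0) \<noteq> 0"
      by (rule sum.not_neutral_contains_not_neutral)
    then show "t \<in> \<sigma> ` A" by (auto split: if_splits)
  qed
  have "(\<Sum>t\<in>{t. F t \<noteq> 0}. F t) = (\<Sum>t\<in>\<sigma> ` A. F t)"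
    by (rule sum.mono_neutral_left) (use sub fin in auto)
  also have "\<dots> = (\<Sum>b\<in>A. \<Sum>t\<in>\<sigma> ` A. if \<sigma> b = t then a b else 0)"
    unfolding F by (rule sum.swap)
  also have "\<dots> = (\<Sum>b\<in>A. a b)"
    by (rule sum.cong) (use fin in auto)
  finally show ?thesis unfolding F_def .
qed


lemma sum_supp_ext:
  fixes c :: "'a \<Rightarrow> int"
  assumes "finite U" "supp c \<subseteq> U"
  shows "(\<Sum>es\<in>supp c. c es * g es) = (\<Sum>es\<in>U. c es * g es)"
  by (rule sum.mono_neutral_left) (use assms in \<open>auto simp: supp_def\<close>)

lemma sets_W_section:
  assumes "W s \<in> sets (M \<Otimes>\<^sub>M count_space UNIV)"
  shows "{x \<in> space M. (x, e) \<in> W s} \<in> sets M"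
proof -
  have "{x \<in> space M. (x, e) \<in> W s} = (\<lambda>x. (x, e)) -` W s \<inter> space M" by auto
  also have "\<dots> \<in> sets M"
    by (rule measurable_sets[OF measurable_Pair2' assms]) simp
  finally show ?thesis .
qed

lemma sets_Wtup_section:
  assumes "\<forall>s. W s \<in> sets (M \<Otimes>\<^sub>M count_space UNIV)"
  shows "{x \<in> space M. (x, es) \<in> Wtup W ss} \<in> sets M"
proof (cases "length es = length ss")
  case True
  have "{x \<in> space M. (x, es) \<in> Wtup W ss} = {x \<in> space M. \<forall>r\<in>{..<length ss}. (x, es ! r) \<in> W (ss ! r)}"
    using True by (auto simp: Wtup_def)
  also have "\<dots> \<in> sets M"
    by (rule sets.sets_Collect_finite_All) (use assms sets_W_section in auto)
  finally show ?thesis .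
next
  case False
  then have eq: "{x \<in> space M. (x, es) \<in> Wtup W ss} = {}" by (auto simp: Wtup_def)
  show ?thesis by (simp only: eq sets.empty_sets)
qed

lemma Phi_meas:
  assumes "\<forall>s. W s \<in> sets (M \<Otimes>\<^sub>M count_space UNIV)"
  shows "(\<lambda>x. Phi W n c x ss) \<in> measurable M (count_space UNIV)"
proof -
  have r: "(\<lambda>x. real_of_int (Phi W n c x ss)) \<in> borel_measurable M"
  proof (cases "length ss = Suc n")
    case True
    have ind: "(\<lambda>x. indicator (Wtup W ss) (x, es) :: real) \<in> borel_measurable M" for es
      by (rule borel_measurable_indicator') (rule sets_Wtup_section[OF assms])
    have eq: "(\<lambda>x. real_of_int (Phi W n c x ss)) = (\<lambda>x. \<Sum>es\<in>supp c. real_of_int (c es) * indicator (Wtup W ss) (x, es))"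
      unfolding Phi_def if_P[OF True] by (auto simp: indicator_def)
    show ?thesis unfolding eq
      by (intro borel_measurable_sum borel_measurable_times borel_measurable_const ind)
  next
    case False then show ?thesis by (simp add: Phi_def)
  qed
  have "(\<lambda>x. floor (real_of_int (Phi W n c x ss))) \<in> measurable M (count_space UNIV)"
    by (rule measurable_compose[OF r measurable_real_floor])
  then show ?thesis by simp
qed

lemma AE_lift:
  fixes M :: "'x measure"
  assumes "prob_space M" and ae: "AE x in M. P x"
  shows "AE p in M \<Otimes>\<^sub>M count_space (tuples n :: ('s::countable) list set). P (fst p)"
proof -
  interpret P: pair_sigma_finite M "count_space (tuples n :: 's list set)"
    by (intro pair_sigma_finite.intro prob_space_imp_sigma_finite assms sigma_finite_measure_count_space_countable) simp
  from ae obtain N where N: "{x\<in>space M. \<not> P x} \<subseteq> N" "emeasure M N = 0" "N \<in> sets M"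
    by (auto elim: AE_E)
  have "N \<times> tuples n \<in> null_sets (M \<Otimes>\<^sub>M count_space (tuples n :: 's list set))"
  proof -
    have sf: "sigma_finite_measure (count_space (tuples n :: 's list set))"
      by (rule sigma_finite_measure_count_space_countable) simp
    have "emeasure (M \<Otimes>\<^sub>M count_space (tuples n :: 's list set)) (N \<times> tuples n) = emeasure M N * emeasure (count_space (tuples n :: 's list set)) (tuples n)"
      by (rule sigma_finite_measure.emeasure_pair_measure_Times[OF sf]) (use N in auto)
    then show ?thesis using N by (simp add: null_sets_def)
  qed
  then show ?thesis
    by (rule AE_I') (use N in \<open>auto simp: space_pair_measure\<close>)
qed


lemma part1:
  fixes M :: "'x measure" and W :: "'s::countable \<Rightarrow> ('x \<times> 'e) set"
  assumes Wm: "\<forall>s. W s \<in> sets (M \<Otimes>\<^sub>M count_space UNIV)" and ft: "finite_type W"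
    and zc: "zchain n c"
  shows "Linf_fs M n (Phi W n c)"
proof -
  have fin: "finite (supp c)" and len: "\<And>es. es \<in> supp c \<Longrightarrow> length es = Suc n"
    using zc by (auto simp: zchain_def)
  have m: "(\<lambda>(ss, x). Phi W n c x ss) \<in> measurable (count_space (tuples n) \<Otimes>\<^sub>M M) (count_space UNIV)"
    by (rule measurable_pair_measure_countable1) (simp_all add: Phi_meas[OF Wm])
  have m2: "(\<lambda>(x, ss). Phi W n c x ss) \<in> measurable (M \<Otimes>\<^sub>M count_space (tuples n)) (count_space UNIV)"
    using m measurable_pair_swap_iff[of "\<lambda>(ss, x). Phi W n c x ss" "count_space (tuples n)" M "count_space UNIV"]
    by simp
  define B where "B = (\<Sum>es\<in>supp c. \<bar>c es\<bar>)"
  have bnd: "\<bar>Phi W n c x ss\<bar> \<le> B" for x ss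
  proof (cases "length ss = Suc n")
    case True
    have "\<bar>Phi W n c x ss\<bar> = \<bar>\<Sum>es\<in>supp c. c es * indicator (Wtup W ss) (x, es)\<bar>"
      using True by (simp add: Phi_def)
    also have "\<dots> \<le> (\<Sum>es\<in>supp c. \<bar>c es * indicator (Wtup W ss) (x, es)\<bar>)" by (rule sum_abs)
    also have "\<dots> \<le> B" unfolding B_def
      by (rule sum_mono) (auto simp: indicator_def abs_mult)
    finally show ?thesis .
  next
    case False then show ?thesis by (simp add: Phi_def B_def sum_nonneg)
  qed
  define T where "T = (\<Union>es\<in>supp c. \<Union>e\<in>set es. {s. W s \<inter> (UNIV \<times> {e}) \<noteq> {}})"
  have finT: "finite T" unfolding T_def
    using fin ft by (auto simp: finite_type_def)
  define F where "F = {ss. set ss \<subseteq> T \<and> length ss = Suc n}"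
  have finF: "finite F" unfolding F_def by (rule finite_lists_length_eq[OF finT])
  have FT: "F \<subseteq> tuples n" by (auto simp: F_def tuples_def)
  have zero: "Phi W n c x ss = 0" if "ss \<notin> F" for x ss
  proof (rule ccontr)
    assume nz: "Phi W n c x ss \<noteq> 0"
    then have L: "length ss = Suc n" by (auto simp: Phi_def split: if_splits)
    from nz L obtain es where es: "es \<in> supp c" "(x, es) \<in> Wtup W ss"
      by (auto simp: Phi_def indicator_def intro: ccontr elim: sum.not_neutral_contains_not_neutral split: if_splits)
    have "set ss \<subseteq> T"
    proof
      fix s assume "s \<in> set ss"
      then obtain r where r: "r < length ss" "ss ! r = s" by (auto simp: in_set_conv_nth)
      have "length es = length ss" "(x, es ! r) \<in> W (ss ! r)" using es(2) r by (auto simp: Wtup_def)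
      then show "s \<in> T" unfolding T_def using es(1) r by (auto intro!: bexI[of _ es] bexI[of _ "es ! r"])
    qed
    then show False using that L by (auto simp: F_def)
  qed
  show ?thesis unfolding Linf_fs_def
    using m2 bnd finF FT zero by (auto intro!: exI[of _ B] exI[of _ F])
qed

lemma part2:
  assumes "zchain n c" "zchain n d"
  shows "Phi W n (\<lambda>es. c es + d es) x ss = Phi W n c x ss + Phi W n d x ss"
proof (cases "length ss = Suc n")
  case True
  define U where "U = supp c \<union> supp d"
  have finU: "finite U" using assms by (auto simp: U_def zchain_def)
  let ?I = "\<lambda>es. indicator (Wtup W ss) (x, es) :: int"
  have "Phi W n (\<lambda>es. c es + d es) x ss = (\<Sum>es\<in>U. (c es + d es) * ?I es)"
  proof -
    have sub: "supp (\<lambda>es. c es + d es) \<subseteq> U" by (auto simp: U_def supp_def)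
    show ?thesis using True sum_supp_ext[OF finU sub, of ?I] by (simp add: Phi_def)
  qed
  also have "\<dots> = (\<Sum>es\<in>U. c es * ?I es) + (\<Sum>es\<in>U. d es * ?I es)"
    by (simp add: distrib_right sum.distrib)
  also have "\<dots> = Phi W n c x ss + Phi W n d x ss"
    using True sum_supp_ext[OF finU, of c ?I] sum_supp_ext[OF finU, of d ?I] by (simp add: Phi_def U_def)
  finally show ?thesis .
next
  case False then show ?thesis by (simp add: Phi_def)
qed


lemma ga_inv:
  fixes act :: "'g::group_add \<Rightarrow> 'a \<Rightarrow> 'a"
  assumes "group_action act"
  shows "act g (act (- g) y) = y" "act (- g) (act g y) = y"
proof -
  have A: "\<forall>x. act 0 x = x" and B: "\<forall>g h x. act (g + h) x = act g (act h x)"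
    using assms by (auto simp: group_action_def)
  have "act (g + - g) y = act g (act (- g) y)" using B by blast
  then show "act g (act (- g) y) = y" using A by simp
  have "act (- g + g) y = act (- g) (act g y)" using B by blast
  then show "act (- g) (act g y) = y" using A by simp
qed

lemma part3:
  assumes gX: "group_action actX" and gE: "group_action actE" and gS: "group_action actS"
    and eqv: "\<forall>g s. (\<lambda>(x, e). (actX g x, actE g e)) ` W s = W (actS g s)"
  shows "Phi W n (actC actE g c) x ss = actL actX actS g (Phi W n c) x ss"
proof -
  have memW: "(actX h a, actE h b) \<in> W (actS h s)" if "(a, b) \<in> W s" for h a b s
    using that eqv[rule_format, of h s] by force
  have key: "(x, actE g e) \<in> W s \<longleftrightarrow> (actX (- g) x, e) \<in> W (actS (- g) s)" for e s
  proof
    assume "(x, actE g e) \<in> W s"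
    from memW[OF this, of "- g"] show "(actX (- g) x, e) \<in> W (actS (- g) s)"
      by (simp add: ga_inv[OF gE])
  next
    assume "(actX (- g) x, e) \<in> W (actS (- g) s)"
    from memW[OF this, of g] show "(x, actE g e) \<in> W s"
      by (simp add: ga_inv[OF gX] ga_inv[OF gS])
  qed
  have keyW: "(x, map (actE g) es) \<in> Wtup W ss \<longleftrightarrow> (actX (- g) x, es) \<in> Wtup W (map (actS (- g)) ss)" for es
    unfolding Wtup_def using key by auto
  have mm1: "map (actE g) (map (actE (- g)) es) = es" for es
    by (induct es) (simp_all add: ga_inv[OF gE])
  have mm2: "map (actE (- g)) (map (actE g) es) = es" for es
    by (induct es) (simp_all add: ga_inv[OF gE])
  have supp_eq: "supp (actC actE g c) = map (actE g) ` supp c"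
  proof
    show "supp (actC actE g c) \<subseteq> map (actE g) ` supp c"
    proof
      fix es assume "es \<in> supp (actC actE g c)"
      then have "map (actE (- g)) es \<in> supp c" by (simp add: supp_def actC_def)
      moreover have "es = map (actE g) (map (actE (- g)) es)" by (simp only: mm1)
      ultimately show "es \<in> map (actE g) ` supp c" by (intro image_eqI[where x="map (actE (- g)) es"])
    qed
    show "map (actE g) ` supp c \<subseteq> supp (actC actE g c)"
      by (auto simp: supp_def actC_def mm2 comp_def ga_inv[OF gE])
  qed
  have inj: "inj_on (map (actE g)) (supp c)"
    by (rule inj_onI) (drule arg_cong[where f="map (actE (- g))"], simp only: mm2)
  show ?thesis
  proof (cases "length ss = Suc n")
    case True
    have "Phi W n (actC actE g c) x ss = (\<Sum>es\<in>map (actE g) ` supp c. c (map (actE (- g)) es) * indicator (Wtup W ss) (x, es))"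
      using True by (simp add: Phi_def supp_eq actC_def)
    also have "\<dots> = (\<Sum>es\<in>supp c. c (map (actE (- g)) (map (actE g) es)) * indicator (Wtup W ss) (x, map (actE g) es))"
      by (rule sum.reindex[OF inj, unfolded comp_def])
    also have "\<dots> = (\<Sum>es\<in>supp c. c es * indicator (Wtup W (map (actS (- g)) ss)) (actX (- g) x, es))"
      by (rule sum.cong) (simp_all add: mm2 indicator_def keyW comp_def ga_inv[OF gE])
    also have "\<dots> = actL actX actS g (Phi W n c) x ss"
      using True by (simp add: actL_def Phi_def)
    finally show ?thesis .
  next
    case False then show ?thesis by (simp add: Phi_def actL_def)
  qed
qed

lemma part5:
  assumes disj: "disjoint_family W" and zc: "zchain 0 c" and cov: "\<forall>e. \<exists>s. (x, e) \<in> W s"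
  shows "augS (Phi W 0 c) x = augE c"
proof -
  have fin: "finite (supp c)" and len: "\<And>es. es \<in> supp c \<Longrightarrow> length es = 1"
    using zc by (auto simp: zchain_def)
  have one: "(x, es) \<in> Wtup W [s] \<longleftrightarrow> (x, hd es) \<in> W s" if len1: "length es = 1" for es s
  proof -
    obtain e where "es = [e]" using len1 by (cases es) auto
    then show ?thesis by (auto simp: Wtup_def)
  qed
  have P: "Phi W 0 c x [s] = (\<Sum>es\<in>supp c. c es * indicator (W s) (x, hd es))" for s
    unfolding Phi_def by (simp, rule sum.cong) (auto simp: indicator_def one len)
  show ?thesis
    unfolding augS_def augE_def P
    by (rule key_sum[OF fin disj]) (use cov in auto)
qed

lemma part4:
  assumes disj: "disjoint_family W" and zc: "zchain (Suc n) c" and cov: "\<forall>e. \<exists>s. (x, e) \<in> W s"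
  shows "bdL (Phi W (Suc n) c) x ss = Phi W n (bdE c) x ss"
proof (cases "length ss = Suc n")
  case False
  then show ?thesis by (simp add: bdL_def Phi_def)
next
  case True
  have fin: "finite (supp c)" and len: "\<And>es. es \<in> supp c \<Longrightarrow> length es = Suc (Suc n)"
    using zc by (auto simp: zchain_def)
  let ?I = "\<lambda>ds. indicator (Wtup W ss) (x, ds) :: int"
  have inner: "(\<Sum>t\<in>{t. Phi W (Suc n) c x (ins_at j t ss) \<noteq> 0}. Phi W (Suc n) c x (ins_at j t ss))
      = (\<Sum>es\<in>supp c. c es * ?I (del_at j es))" if j: "j \<le> length ss" for j
  proof -
    have F: "(\<lambda>t. Phi W (Suc n) c x (ins_at j t ss)) =
       (\<lambda>t. \<Sum>es\<in>supp c. (c es * ?I (del_at j es)) * indicator (W t) (x, es ! j))"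
    proof
      fix t
      show "Phi W (Suc n) c x (ins_at j t ss) = (\<Sum>es\<in>supp c. (c es * ?I (del_at j es)) * indicator (W t) (x, es ! j))"
      proof -
        have "Phi W (Suc n) c x (ins_at j t ss) = (\<Sum>es\<in>supp c. c es * indicator (Wtup W (ins_at j t ss)) (x, es))"
          using True by (simp add: Phi_def)
        also have "\<dots> = (\<Sum>es\<in>supp c. (c es * ?I (del_at j es)) * indicator (W t) (x, es ! j))"
        proof (rule sum.cong[OF refl])
          fix es assume "es \<in> supp c"
          then have le: "length es = Suc (length ss)" using len True by simp
          show "c es * indicator (Wtup W (ins_at j t ss)) (x, es) = (c es * ?I (del_at j es)) * indicator (W t) (x, es ! j)"
            by (simp add: indicator_def Wtup_ins_at[OF le j])
        qed
        finally show ?thesis .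
      qed
    qed
    have F': "Phi W (Suc n) c x (ins_at j t ss) = (\<Sum>es\<in>supp c. (c es * ?I (del_at j es)) * indicator (W t) (x, es ! j))" for t
      using fun_cong[OF F, of t] by simp
    show ?thesis unfolding F'
      by (rule key_sum[OF fin disj]) (use cov in auto)
  qed
  have "bdL (Phi W (Suc n) c) x ss = (\<Sum>j\<le>length ss. (-1) ^ j * (\<Sum>es\<in>supp c. c es * ?I (del_at j es)))"
    unfolding bdL_def by (rule sum.cong) (simp_all add: inner)
  also have "\<dots> = (\<Sum>es\<in>supp c. \<Sum>j\<le>length ss. c es * (-1) ^ j * ?I (del_at j es))"
    by (simp add: sum_distrib_left sum.swap[of _ "{..length ss}"] mult_ac)
  finally have LHS: "bdL (Phi W (Suc n) c) x ss = (\<Sum>es\<in>supp c. \<Sum>j\<le>length ss. c es * (-1) ^ j * ?I (del_at j es))" .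
  define D where "D = (\<lambda>(es, j). del_at j es) ` (SIGMA es:supp c. {..<length es})"
  have finD: "finite D" unfolding D_def using fin by auto
  have subD: "supp (bdE c) \<subseteq> D"
  proof
    fix ds assume "ds \<in> supp (bdE c)"
    then have "bdE c ds \<noteq> 0" by (simp add: supp_def)
    then obtain es where es: "es \<in> supp c" "(\<Sum>j < length es. if del_at j es = ds then (-1) ^ j else 0) \<noteq> (0::int)"
    proof -
      from \<open>bdE c ds \<noteq> 0\<close> obtain es where "es \<in> supp c"
        "c es * (\<Sum>j < length es. if del_at j es = ds then (-1) ^ j else 0) \<noteq> (0::int)"
        unfolding bdE_def by (rule sum.not_neutral_contains_not_neutral)
      then show ?thesis using that by simp
    qed
    obtain j where j: "j \<in> {..<length es}" "(if del_at j es = ds then (-1) ^ j else 0) \<noteq> (0::int)"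
      using es(2) by (rule sum.not_neutral_contains_not_neutral)
    then have "j < length es" "del_at j es = ds" by (auto split: if_splits)
    then show "ds \<in> D" unfolding D_def using es(1) by force
  qed
  have inD: "del_at j es \<in> D" if "es \<in> supp c" "j < length es" for es j
    unfolding D_def using that by force
  have "Phi W n (bdE c) x ss = (\<Sum>ds\<in>D. bdE c ds * ?I ds)"
    using True sum_supp_ext[OF finD subD, of ?I] by (simp add: Phi_def)
  also have "\<dots> = (\<Sum>ds\<in>D. \<Sum>es\<in>supp c. \<Sum>j<length es. (if del_at j es = ds then c es * (-1) ^ j * ?I ds else 0))"
    unfolding bdE_def by (simp add: sum_distrib_left sum_distrib_right if_distrib if_distribR mult_ac cong: if_cong)
  also have "\<dots> = (\<Sum>es\<in>supp c. \<Sum>j<length es. \<Sum>ds\<in>D. (if del_at j es = ds then c es * (-1) ^ j * ?I ds else 0))"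
    by (simp add: sum.swap[of _ D])
  also have "\<dots> = (\<Sum>es\<in>supp c. \<Sum>j<length es. c es * (-1) ^ j * ?I (del_at j es))"
    by (rule sum.cong[OF refl], rule sum.cong[OF refl]) (simp add: sum.delta'[OF finD] inD)
  also have "\<dots> = (\<Sum>es\<in>supp c. \<Sum>j\<le>length ss. c es * (-1) ^ j * ?I (del_at j es))"
    by (rule sum.cong[OF refl]) (simp add: len True lessThan_Suc_atMost)
  finally show ?thesis using LHS by simp
qed


lemma cover:
  fixes M :: "'x measure" and W :: "'s \<Rightarrow> ('x \<times> 'e::countable) set"
  assumes "prob_space M"
    and null: "space (M \<Otimes>\<^sub>M count_space UNIV) - (\<Union>s. W s) \<in> null_sets (M \<Otimes>\<^sub>M count_space UNIV)"
  shows "AE x in M. \<forall>e. \<exists>s. (x, e) \<in> W s"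
proof -
  interpret P: pair_sigma_finite M "count_space (UNIV :: 'e set)"
    by (intro pair_sigma_finite.intro prob_space_imp_sigma_finite assms sigma_finite_measure_count_space_countable) simp
  have "AE p in M \<Otimes>\<^sub>M count_space UNIV. p \<in> (\<Union>s. W s)"
    by (rule AE_I'[OF null]) auto
  then have "AE x in M. AE e in count_space UNIV. (x, e) \<in> (\<Union>s. W s)"
    by (rule P.AE_pair)
  then show ?thesis
    by (rule eventually_mono) (auto simp: AE_count_space)
qed

theorem proposition4p5:
  fixes M :: "'x::polish_space measure"
    and actX :: "'g::{group_add,countable} \<Rightarrow> 'x \<Rightarrow> 'x"
    and actE :: "'g \<Rightarrow> 'e::countable \<Rightarrow> 'e"
    and actS :: "'g \<Rightarrow> 's::countable \<Rightarrow> 's"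
    and W :: "'s \<Rightarrow> ('x \<times> 'e) set"
  assumes "standard_gamma_space M actX"
    and "ess_free M actX"
    and "group_action actE" and "free_action actE"
    and "equivariant_partition M actX actE actS W"
    and "finite_type W"
  shows "(\<forall>n c. zchain n c \<longrightarrow> Linf_fs M n (Phi W n c))
    \<and> (\<forall>n c d. zchain n c \<longrightarrow> zchain n d \<longrightarrow>
          aeq M n (Phi W n (\<lambda>es. c es + d es)) (\<lambda>x ss. Phi W n c x ss + Phi W n d x ss))
    \<and> (\<forall>n c g. zchain n c \<longrightarrow> aeq M n (Phi W n (actC actE g c)) (actL actX actS g (Phi W n c)))
    \<and> (\<forall>n c. zchain (Suc n) c \<longrightarrow> aeq M n (bdL (Phi W (Suc n) c)) (Phi W n (bdE c)))
    \<and> (\<forall>c. zchain 0 c \<longrightarrow> (AE x in M. augS (Phi W 0 c) x = augE c))"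
proof -
  have prob: "prob_space M" and gX: "group_action actX"
    using assms(1) unfolding standard_gamma_space_def by (blast, blast)
  note ep = assms(5)[unfolded equivariant_partition_def]
  have gS: "group_action actS" using ep by (rule conjunct1)
  have Wm: "\<forall>s. W s \<in> sets (M \<Otimes>\<^sub>M count_space UNIV)"
    by (rule ep[THEN conjunct2, THEN conjunct2, THEN conjunct1])
  have disj: "disjoint_family W"
    by (rule ep[THEN conjunct2, THEN conjunct2, THEN conjunct2, THEN conjunct1])
  have null: "space (M \<Otimes>\<^sub>M count_space UNIV) - (\<Union>s. W s) \<in> null_sets (M \<Otimes>\<^sub>M count_space UNIV)"
    by (rule ep[THEN conjunct2, THEN conjunct2, THEN conjunct2, THEN conjunct2, THEN conjunct1])
  have eqv: "\<forall>g s. (\<lambda>(x, e). (actX g x, actE g e)) ` W s = W (actS g s)"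
    by (rule ep[THEN conjunct2, THEN conjunct2, THEN conjunct2, THEN conjunct2, THEN conjunct2])
  have cov: "AE x in M. \<forall>e. \<exists>s. (x, e) \<in> W s"
    by (rule cover[OF prob null])
  have P1: "\<forall>n c. zchain n c \<longrightarrow> Linf_fs M n (Phi W n c)"
    by (intro allI impI part1[OF Wm assms(6)])
  have P2: "\<forall>n c d. zchain n c \<longrightarrow> zchain n d \<longrightarrow>
          aeq M n (Phi W n (\<lambda>es. c es + d es)) (\<lambda>x ss. Phi W n c x ss + Phi W n d x ss)"
  proof (intro allI impI)
    fix n and c d :: "'e list \<Rightarrow> int"
    assume zc: "zchain n c" "zchain n d"
    show "aeq M n (Phi W n (\<lambda>es. c es + d es)) (\<lambda>x ss. Phi W n c x ss + Phi W n d x ss)"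
      unfolding aeq_def by (intro AE_I2 part2[OF zc])
  qed
  have P3: "\<forall>n c g. zchain n c \<longrightarrow> aeq M n (Phi W n (actC actE g c)) (actL actX actS g (Phi W n c))"
    unfolding aeq_def by (intro allI impI AE_I2 part3[OF gX assms(3) gS eqv])
  have P4: "\<forall>n c. zchain (Suc n) c \<longrightarrow> aeq M n (bdL (Phi W (Suc n) c)) (Phi W n (bdE c))"
  proof (intro allI impI)
    fix n and c :: "'e list \<Rightarrow> int"
    assume zc: "zchain (Suc n) c"
    have "AE p in M \<Otimes>\<^sub>M count_space (tuples n :: 's list set). \<forall>e. \<exists>s. (fst p, e) \<in> W s"
      by (rule AE_lift[OF prob cov])
    then show "aeq M n (bdL (Phi W (Suc n) c)) (Phi W n (bdE c))"
      unfolding aeq_def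
      apply (rule AE_mp)
      apply (rule AE_I2)
      apply (rule impI)
      apply (erule part4[OF disj zc])
      done
  qed
  have P5: "\<forall>c. zchain 0 c \<longrightarrow> (AE x in M. augS (Phi W 0 c) x = augE c)"
  proof (intro allI impI)
    fix c :: "'e list \<Rightarrow> int"
    assume zc: "zchain 0 c"
    from cov show "AE x in M. augS (Phi W 0 c) x = augE c"
      apply (rule AE_mp)
      apply (rule AE_I2)
      apply (rule impI)
      apply (erule part5[OF disj zc])
      done
  qed
  show ?thesis by (intro conjI P1 P2 P3 P4 P5)
qed

end
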